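(* Let $G_1$ be a finite $k$-graph with $k\ge 3$. Then the line graph $G_2=L(G_1)$ is symmetric with respect to graph entropy, i.e., the uniform distribution on $V(G_2)$ maximizes $H(G_2,P)$ over all probability distributions $P$ on $V(G_2)$.
   Context: A $k$-graph is a $k$-regular graph whose fractional edge-colouring number equals $k$; here the fractional edge-colouring number $\chi'_f(G_1)$ is $\min\{\sum_{M}\lambda_M : \lambda\ge 0,\ \sum_M \lambda_M \mathbf b_M=\mathbf 1\}$, the sum ranging over all matchings $M$ of $G_1$ with characteristic vectors $\mathbf b_M\in\mathbb{R}^{E(G_1)}$. The line graph $L(G_1)$ has vertex set $E(G_1)$, two edges adjacent when they share an endpoint. For a finite graph $G$ with $V(G)=\{1,\dots,n\}$, the vertex packing polytope $VP(G)$ is the convex hull of the characteristic vectors of independent sets of $G$, and for a probability distribution $P$ on $V(G)$ the graph entropy is $H(G,P)=\min_{\mathbf a\in VP(G)}\sum_{i=1}^n p_i\log(1/a_i)$. *)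

theory Defs
  imports Complex_Main
begin

text \<open>Finite loopless multigraphs: vertex set V, edge set E, and an endpoint map
  assigning to every edge its set of two distinct endpoints (parallel edges allowed).\<close>

definition multigraph :: "'v set \<Rightarrow> 'e set \<Rightarrow> ('e \<Rightarrow> 'v set) \<Rightarrow> bool" where
  "multigraph V E ends \<longleftrightarrow> finite V \<and> finite E \<and>
     (\<forall>e\<in>E. ends e \<subseteq> V \<and> card (ends e) = 2)"

definition degree :: "'e set \<Rightarrow> ('e \<Rightarrow> 'v set) \<Rightarrow> 'v \<Rightarrow> nat" where
  "degree E ends v = card {e\<in>E. v \<in> ends e}"

definition regular :: "'v set \<Rightarrow> 'e set \<Rightarrow> ('e \<Rightarrow> 'v set) \<Rightarrow> nat \<Rightarrow> bool" where
  "regular V E ends k \<longleftrightarrow> (\<forall>v\<in>V. degree E ends v = k)"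

definition matching :: "'e set \<Rightarrow> ('e \<Rightarrow> 'v set) \<Rightarrow> 'e set \<Rightarrow> bool" where
  "matching E ends M \<longleftrightarrow> M \<subseteq> E \<and>
     (\<forall>e\<in>M. \<forall>f\<in>M. e \<noteq> f \<longrightarrow> ends e \<inter> ends f = {})"

definition matchings :: "'e set \<Rightarrow> ('e \<Rightarrow> 'v set) \<Rightarrow> 'e set set" where
  "matchings E ends = {M. matching E ends M}"

definition frac_edge_chromatic :: "'e set \<Rightarrow> ('e \<Rightarrow> 'v set) \<Rightarrow> real" where
  "frac_edge_chromatic E ends =
     Inf {(\<Sum>M\<in>matchings E ends. lam M) | lam.
            (\<forall>M\<in>matchings E ends. lam M \<ge> 0) \<and>
            (\<forall>e\<in>E. (\<Sum>M\<in>matchings E ends. lam M * (if e \<in> M then 1 else 0)) = 1)}"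

definition k_graph :: "'v set \<Rightarrow> 'e set \<Rightarrow> ('e \<Rightarrow> 'v set) \<Rightarrow> nat \<Rightarrow> bool" where
  "k_graph V E ends k \<longleftrightarrow> regular V E ends k \<and> frac_edge_chromatic E ends = real k"

definition line_adj :: "('e \<Rightarrow> 'v set) \<Rightarrow> 'e \<Rightarrow> 'e \<Rightarrow> bool" where
  "line_adj ends e f \<longleftrightarrow> e \<noteq> f \<and> ends e \<inter> ends f \<noteq> {}"

definition independent :: "'a set \<Rightarrow> ('a \<Rightarrow> 'a \<Rightarrow> bool) \<Rightarrow> 'a set \<Rightarrow> bool" where
  "independent S adj I \<longleftrightarrow> I \<subseteq> S \<and> (\<forall>x\<in>I. \<forall>y\<in>I. \<not> adj x y)"

text \<open>Vertex packing polytope: convex hull of characteristic vectors (in S \<Rightarrow> real,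
  extended by 0 outside S) of independent sets, written out as convex combinations.\<close>

definition VP :: "'a set \<Rightarrow> ('a \<Rightarrow> 'a \<Rightarrow> bool) \<Rightarrow> ('a \<Rightarrow> real) set" where
  "VP S adj = {a. \<exists>mu :: 'a set \<Rightarrow> real.
      (\<forall>I\<in>{I. independent S adj I}. mu I \<ge> 0) \<and>
      (\<Sum>I\<in>{I. independent S adj I}. mu I) = 1 \<and>
      (\<forall>i. a i = (\<Sum>I\<in>{I. independent S adj I}. mu I * (if i \<in> I then 1 else 0)))}"

definition prob_dist :: "'a set \<Rightarrow> ('a \<Rightarrow> real) \<Rightarrow> bool" where
  "prob_dist S p \<longleftrightarrow> (\<forall>i\<in>S. p i \<ge> 0) \<and> (\<Sum>i\<in>S. p i) = 1"

text \<open>Graph entropy H(G,P) = min over a in VP(G) of sum p_i log(1/a_i), with the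
  convention 0 log(1/0) = 0 (points with a_i = 0 < p_i give value +infinity and are
  excluded).\<close>

definition graph_entropy :: "'a set \<Rightarrow> ('a \<Rightarrow> 'a \<Rightarrow> bool) \<Rightarrow> ('a \<Rightarrow> real) \<Rightarrow> real" where
  "graph_entropy S adj p =
     Inf {(\<Sum>i\<in>S. p i * log 2 (1 / a i)) | a.
            a \<in> VP S adj \<and> (\<forall>i\<in>S. p i > 0 \<longrightarrow> a i > 0)}"

definition uniform_dist :: "'a set \<Rightarrow> 'a \<Rightarrow> real" where
  "uniform_dist S = (\<lambda>i. 1 / real (card S))"

definition entropy_symmetric :: "'a set \<Rightarrow> ('a \<Rightarrow> 'a \<Rightarrow> bool) \<Rightarrow> bool" where
  "entropy_symmetric S adj \<longleftrightarrow>
     (\<forall>p. prob_dist S p \<longrightarrow> graph_entropy S adj p \<le> graph_entropy S adj (uniform_dist S))"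

end

theory Submission
  imports Defs
begin

lemma indep_eq: "{I. independent E (line_adj ends) I} = matchings E ends"
  by (auto simp: independent_def matchings_def matching_def line_adj_def)

lemma finite_matchings: "finite E \<Longrightarrow> finite (matchings E ends)"
  by (rule finite_subset[of _ "Pow E"]) (auto simp: matchings_def matching_def)

lemma VP_bounds:
  assumes "a \<in> VP S adj"
  shows "0 \<le> a i \<and> a i \<le> 1"
proof -
  from assms obtain mu where mu: "\<forall>I\<in>{I. independent S adj I}. mu I \<ge> 0"
    "(\<Sum>I\<in>{I. independent S adj I}. mu I) = 1"
    "\<forall>i. a i = (\<Sum>I\<in>{I. independent S adj I}. mu I * (if i \<in> I then 1 else 0))"
    unfolding VP_def by blast
  have "a i \<ge> 0" using mu by (auto intro!: sum_nonneg)
  moreover have "a i \<le> (\<Sum>I\<in>{I. independent S adj I}. mu I)"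
  proof -
    have "a i = (\<Sum>I\<in>{I. independent S adj I}. mu I * (if i \<in> I then 1 else 0))"
      using mu(3) by blast
    also have "\<dots> \<le> (\<Sum>I\<in>{I. independent S adj I}. mu I)"
      by (rule sum_mono) (use mu(1) in auto)
    finally show ?thesis .
  qed
  ultimately show ?thesis using mu by simp
qed

lemma ent_nonneg:
  assumes "\<forall>i\<in>S. p i \<ge> 0" and "a \<in> VP S adj" and "\<forall>i\<in>S. p i > 0 \<longrightarrow> a i > 0"
  shows "(\<Sum>i\<in>S. p i * log 2 (1 / a i)) \<ge> 0"
proof (rule sum_nonneg)
  fix i assume i: "i \<in> S"
  show "0 \<le> p i * log 2 (1 / a i)"
  proof (cases "p i > 0")
    case True
    then have "a i > 0" using assms i by auto
    moreover have "a i \<le> 1" using VP_bounds[OF assms(2)] by auto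
    ultimately have "1 / a i \<ge> 1" by simp
    then have "log 2 (1 / a i) \<ge> 0" using zero_le_log_cancel_iff[of 2 "1 / a i"] by linarith
    then show ?thesis using True by simp
  next
    case False
    then have "p i = 0" using assms i by force
    then show ?thesis by simp
  qed
qed

lemma ent_bdd:
  assumes "\<forall>i\<in>S. p i \<ge> 0"
  shows "bdd_below {(\<Sum>i\<in>S. p i * log 2 (1 / a i)) | a.
            a \<in> VP S adj \<and> (\<forall>i\<in>S. p i > 0 \<longrightarrow> a i > 0)}"
  unfolding bdd_below_def using ent_nonneg[OF assms] by blast

definition feas :: "'e set \<Rightarrow> ('e \<Rightarrow> 'v set) \<Rightarrow> ('e set \<Rightarrow> real) \<Rightarrow> bool" where
  "feas E ends lam \<longleftrightarrow> (\<forall>M\<in>matchings E ends. lam M \<ge> 0) \<and>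
            (\<forall>e\<in>E. (\<Sum>M\<in>matchings E ends. lam M * (if e \<in> M then 1 else 0)) = 1)"

lemma feas_sum_ge1:
  assumes "feas E ends lam" "e \<in> E" "finite E"
  shows "(\<Sum>M\<in>matchings E ends. lam M) \<ge> 1"
proof -
  have "1 = (\<Sum>M\<in>matchings E ends. lam M * (if e \<in> M then 1 else 0))"
    using assms unfolding feas_def by auto
  also have "\<dots> \<le> (\<Sum>M\<in>matchings E ends. lam M)"
    by (rule sum_mono) (use assms in \<open>auto simp: feas_def\<close>)
  finally show ?thesis .
qed

lemma feas_exists:
  assumes "finite E"
  shows "feas E ends (\<lambda>M. if card M = 1 then 1 else 0)"
  unfolding feas_def
proof (intro conjI ballI)
  fix e assume e: "e \<in> E"
  have "{e} \<in> matchings E ends" using e by (auto simp: matchings_def matching_def)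
  have "(\<Sum>M\<in>matchings E ends. (if card M = 1 then 1 else 0) * (if e \<in> M then 1 else 0))
      = (\<Sum>M\<in>matchings E ends. (if M = {e} then 1 else 0::real))"
    by (rule sum.cong) (auto simp: card_1_singleton_iff)
  also have "\<dots> = 1" using \<open>{e} \<in> matchings E ends\<close> finite_matchings[OF assms, of ends]
    by (simp add: sum.delta)
  finally show "(\<Sum>M\<in>matchings E ends. (if card M = 1 then 1 else 0) * (if e \<in> M then 1 else 0)) = (1::real)" .
qed auto

lemma feas_point:
  assumes "feas E ends lam" "finite E" "E \<noteq> {}"
  defines "S \<equiv> (\<Sum>M\<in>matchings E ends. lam M)"
  defines "a \<equiv> (\<lambda>i. (\<Sum>M\<in>matchings E ends. (lam M / S) * (if i \<in> M then 1 else 0)))"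
  shows "a \<in> VP E (line_adj ends)" "\<forall>i\<in>E. a i = 1 / S" "S \<ge> 1"
proof -
  obtain e where e: "e \<in> E" using assms by auto
  show S1: "S \<ge> 1" unfolding S_def using feas_sum_ge1[OF assms(1) e assms(2)] .
  show "a \<in> VP E (line_adj ends)"
    unfolding VP_def indep_eq
  proof (intro CollectI exI[of _ "\<lambda>M. lam M / S"] conjI allI ballI)
    fix M assume "M \<in> matchings E ends"
    then show "0 \<le> lam M / S" using assms(1) S1 unfolding feas_def by auto
  next
    show "(\<Sum>M\<in>matchings E ends. lam M / S) = 1" using S1
      by (simp add: sum_divide_distrib[symmetric] S_def)
  qed (simp add: a_def)
  show "\<forall>i\<in>E. a i = 1 / S"
  proof
    fix i assume i: "i \<in> E"
    have "a i = (\<Sum>M\<in>matchings E ends. lam M * (if i \<in> M then 1 else 0)) / S"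
      unfolding a_def by (simp add: sum_divide_distrib)
    also have "\<dots> = 1 / S" using assms(1) i unfolding feas_def by auto
    finally show "a i = 1 / S" .
  qed
qed

lemma upper:
  assumes "feas E ends lam" "finite E" "E \<noteq> {}" "prob_dist E p"
  shows "graph_entropy E (line_adj ends) p \<le> log 2 (\<Sum>M\<in>matchings E ends. lam M)"
proof -
  define S where "S = (\<Sum>M\<in>matchings E ends. lam M)"
  define a where "a = (\<lambda>i. (\<Sum>M\<in>matchings E ends. (lam M / S) * (if i \<in> M then 1 else 0)))"
  note fp0 = feas_point[OF assms(1-3), folded S_def, folded a_def]
  have aE: "\<forall>i\<in>E. a i = 1 / S" using feas_point(2)[OF assms(1-3)] unfolding a_def S_def by blast
  note fp = fp0(1) aE fp0(3)
  have val: "(\<Sum>i\<in>E. p i * log 2 (1 / a i)) = log 2 S"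
  proof -
    have "(\<Sum>i\<in>E. p i * log 2 (1 / a i)) = (\<Sum>i\<in>E. p i * log 2 S)"
    proof (intro sum.cong refl)
      fix i assume "i \<in> E"
      then have "a i = 1 / S" using fp(2) unfolding a_def by blast
      then show "p i * log 2 (1 / a i) = p i * log 2 S" by simp
    qed
    also have "\<dots> = log 2 S" using assms(4) unfolding prob_dist_def
      by (simp add: sum_distrib_right[symmetric])
    finally show ?thesis .
  qed
  have mem: "log 2 S \<in> {(\<Sum>i\<in>E. p i * log 2 (1 / a i)) | a.
            a \<in> VP E (line_adj ends) \<and> (\<forall>i\<in>E. p i > 0 \<longrightarrow> a i > 0)}"
    using fp val by (intro CollectI exI[of _ a]) auto
  show ?thesis unfolding graph_entropy_def S_def[symmetric]
    by (rule cInf_lower[OF mem ent_bdd]) (use assms(4) in \<open>auto simp: prob_dist_def\<close>)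
qed

lemma matching_card:
  assumes "multigraph V E ends" "matching E ends I"
  shows "2 * card I \<le> card V"
proof -
  have IE: "I \<subseteq> E" using assms(2) by (auto simp: matching_def)
  have fin: "finite E" "finite V" using assms(1) by (auto simp: multigraph_def)
  have fI: "finite I" using IE fin finite_subset by blast
  have "card (\<Union>e\<in>I. ends e) = (\<Sum>e\<in>I. card (ends e))"
  proof (rule card_UN_disjoint[OF fI])
    show "\<forall>i\<in>I. finite (ends i)"
    proof
      fix i assume "i \<in> I"
      then have "card (ends i) = 2" using IE assms(1) by (auto simp: multigraph_def)
      then show "finite (ends i)" by (intro card_ge_0_finite) simp
    qed
    show "\<forall>i\<in>I. \<forall>j\<in>I. i \<noteq> j \<longrightarrow> ends i \<inter> ends j = {}"
      using assms(2) by (auto simp: matching_def)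
  qed
  also have "\<dots> = (\<Sum>e\<in>I. 2)" using IE assms(1) by (intro sum.cong) (auto simp: multigraph_def)
  also have "\<dots> = 2 * card I" by simp
  finally have eq: "card (\<Union>e\<in>I. ends e) = 2 * card I" .
  have "(\<Union>e\<in>I. ends e) \<subseteq> V" using IE assms(1) by (auto simp: multigraph_def)
  then have "card (\<Union>e\<in>I. ends e) \<le> card V" using fin by (intro card_mono) auto
  then show ?thesis using eq by simp
qed

lemma handshake:
  assumes "multigraph V E ends" "regular V E ends k"
  shows "k * card V = 2 * card E"
proof -
  have fin: "finite E" "finite V" using assms(1) by (auto simp: multigraph_def)
  have "k * card V = (\<Sum>v\<in>V. degree E ends v)" using assms(2) by (simp add: regular_def)
  also have "\<dots> = (\<Sum>v\<in>V. \<Sum>e\<in>E. if v \<in> ends e then 1 else (0::nat))"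
    unfolding degree_def using fin by (intro sum.cong refl) (simp add: sum.If_cases Int_def)
  also have "\<dots> = (\<Sum>e\<in>E. \<Sum>v\<in>V. if v \<in> ends e then 1 else (0::nat))"
    by (rule sum.swap)
  also have "\<dots> = (\<Sum>e\<in>E. card (ends e))"
  proof (intro sum.cong refl)
    fix e assume "e \<in> E"
    then have "ends e \<subseteq> V" using assms(1) by (auto simp: multigraph_def)
    then have "V \<inter> {v. v \<in> ends e} = ends e" by auto
    then show "(\<Sum>v\<in>V. if v \<in> ends e then 1 else (0::nat)) = card (ends e)"
      using fin by (simp add: sum.If_cases)
  qed
  also have "\<dots> = (\<Sum>e\<in>E. 2)" using assms(1) by (intro sum.cong) (auto simp: multigraph_def)
  finally show ?thesis by simp
qed

lemma VP_sum:
  assumes "multigraph V E ends" "a \<in> VP E (line_adj ends)"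
  shows "(\<Sum>i\<in>E. a i) \<le> real (card V) / 2"
proof -
  have fin: "finite E" using assms(1) by (auto simp: multigraph_def)
  from assms(2) obtain mu where mu: "\<forall>I\<in>matchings E ends. mu I \<ge> 0"
    "(\<Sum>I\<in>matchings E ends. mu I) = 1"
    "\<forall>i. a i = (\<Sum>I\<in>matchings E ends. mu I * (if i \<in> I then 1 else 0))"
    unfolding VP_def indep_eq by blast
  have "(\<Sum>i\<in>E. a i) = (\<Sum>i\<in>E. \<Sum>I\<in>matchings E ends. mu I * (if i \<in> I then 1 else 0))"
    using mu by simp
  also have "\<dots> = (\<Sum>I\<in>matchings E ends. \<Sum>i\<in>E. mu I * (if i \<in> I then 1 else 0))"
    by (rule sum.swap)
  also have "\<dots> = (\<Sum>I\<in>matchings E ends. mu I * real (card I))"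
  proof (intro sum.cong refl)
    fix I assume I: "I \<in> matchings E ends"
    then have "I \<subseteq> E" by (auto simp: matchings_def matching_def)
    then have "E \<inter> {i. i \<in> I} = I" by auto
    then show "(\<Sum>i\<in>E. mu I * (if i \<in> I then 1 else 0)) = mu I * real (card I)"
      using fin by (simp add: sum_distrib_left[symmetric] sum.If_cases)
  qed
  also have "\<dots> \<le> (\<Sum>I\<in>matchings E ends. mu I * (real (card V) / 2))"
  proof (intro sum_mono mult_left_mono)
    fix I assume I: "I \<in> matchings E ends"
    then have "2 * card I \<le> card V" using matching_card[OF assms(1)] by (auto simp: matchings_def)
    then show "real (card I) \<le> real (card V) / 2" by linarith
    show "0 \<le> mu I" using mu I by auto
  qed
  also have "\<dots> = real (card V) / 2" unfolding times_divide_eq_right[symmetric] sum_distrib_right[symmetric] mu(2) by simp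
  finally show ?thesis .
qed

lemma lower:
  assumes "multigraph V E ends" "regular V E ends k" "k > 0" "E \<noteq> {}"
    "a \<in> VP E (line_adj ends)" "\<forall>i\<in>E. a i > 0"
  shows "log 2 (real k) \<le> (\<Sum>i\<in>E. uniform_dist E i * log 2 (1 / a i))"
proof -
  have fin: "finite E" using assms(1) by (auto simp: multigraph_def)
  define n where "n = real (card E)"
  have n0: "n > 0" using fin assms(4) by (simp add: n_def card_gt_0_iff)
  have hs: "real k * real (card V) = 2 * n"
    using handshake[OF assms(1,2)] unfolding n_def by (metis of_nat_mult of_nat_numeral)
  have k0: "real k > 0" using assms(3) by simp
  have "(\<Sum>i\<in>E. ln (real k * a i)) \<le> (\<Sum>i\<in>E. real k * a i - 1)"
    using assms(6) k0 by (intro sum_mono ln_le_minus_one) auto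
  also have "\<dots> = real k * (\<Sum>i\<in>E. a i) - n"
    by (simp add: sum_subtractf sum_distrib_left n_def)
  also have "\<dots> \<le> real k * (real (card V) / 2) - n"
    using VP_sum[OF assms(1,5)] k0 by simp
  also have "\<dots> = 0" using hs by simp
  finally have L: "(\<Sum>i\<in>E. ln (real k * a i)) \<le> 0" .
  have "(\<Sum>i\<in>E. uniform_dist E i * log 2 (1 / a i))
      = (\<Sum>i\<in>E. (ln (real k) - ln (real k * a i)) / (n * ln 2))"
  proof (intro sum.cong refl)
    fix i assume "i \<in> E"
    then have ai: "a i > 0" using assms(6) by auto
    show "uniform_dist E i * log 2 (1 / a i) = (ln (real k) - ln (real k * a i)) / (n * ln 2)"
      using ai k0 by (simp add: uniform_dist_def n_def log_def ln_mult ln_div)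
  qed
  also have "\<dots> = (n * ln (real k) - (\<Sum>i\<in>E. ln (real k * a i))) / (n * ln 2)"
    by (simp add: sum_divide_distrib[symmetric] sum_subtractf n_def)
  also have "\<dots> \<ge> (n * ln (real k)) / (n * ln 2)"
    using L n0 by (intro divide_right_mono) auto
  finally show ?thesis using n0 by (simp add: log_def)
qed

theorem mainTheorem5:
  fixes V :: "'v set" and E :: "'e set" and ends :: "'e \<Rightarrow> 'v set" and k :: nat
  assumes "multigraph V E ends"
    and "k_graph V E ends k"
    and "k \<ge> 3"
  shows "entropy_symmetric E (line_adj ends)"
proof -
  have fin: "finite E" using assms(1) by (auto simp: multigraph_def)
  have reg: "regular V E ends k" and fk: "frac_edge_chromatic E ends = real k"
    using assms(2) by (auto simp: k_graph_def)
  define F where "F = {(\<Sum>M\<in>matchings E ends. lam M) | lam. feas E ends lam}"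
  have InfF: "Inf F = real k" using fk unfolding F_def frac_edge_chromatic_def feas_def by simp
  have E0: "E \<noteq> {}"
  proof
    assume E: "E = {}"
    have m: "matchings E ends = {{}}" using E by (auto simp: matchings_def matching_def)
    have "F = {x. x \<ge> 0}"
    proof (rule set_eqI, rule iffI)
      fix x assume "x \<in> F" then show "x \<in> {x. 0 \<le> x}" unfolding F_def feas_def m by (auto simp: E)
    next
      fix x :: real assume "x \<in> {x. 0 \<le> x}"
      then show "x \<in> F" unfolding F_def feas_def m by (simp add: E) (rule exI[of _ "\<lambda>_. x"], simp)
    qed
    then have "Inf F = 0" by (simp add: atLeast_def[symmetric])
    then show False using InfF assms(3) by simp
  qed
  have Fne: "F \<noteq> {}" using feas_exists[OF fin] unfolding F_def by blast
  have Fbdd: "bdd_below F" unfolding F_def bdd_below_def feas_def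
    by (intro exI[of _ 0]) (auto intro!: sum_nonneg)
  have k0: "k > 0" using assms(3) by simp
  have low: "log 2 (real k) \<le> graph_entropy E (line_adj ends) (uniform_dist E)"
    unfolding graph_entropy_def
  proof (rule cInf_greatest)
    define lam :: "'e set \<Rightarrow> real" where "lam = (\<lambda>M. if card M = 1 then 1 else 0)"
    have fl: "feas E ends lam" using feas_exists[OF fin] by (simp add: lam_def)
    note fp = feas_point[OF fl fin E0]
    let ?S = "(\<Sum>M\<in>matchings E ends. lam M)"
    let ?a = "(\<lambda>i. (\<Sum>M\<in>matchings E ends. (lam M / ?S) * (if i \<in> M then 1 else 0)))"
    have "?a \<in> VP E (line_adj ends)" "\<forall>i\<in>E. ?a i > 0" using fp by auto
    then show "{(\<Sum>i\<in>E. uniform_dist E i * log 2 (1 / a i)) | a.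
            a \<in> VP E (line_adj ends) \<and> (\<forall>i\<in>E. uniform_dist E i > 0 \<longrightarrow> a i > 0)} \<noteq> {}"
      by blast
  next
    fix x assume "x \<in> {(\<Sum>i\<in>E. uniform_dist E i * log 2 (1 / a i)) | a.
            a \<in> VP E (line_adj ends) \<and> (\<forall>i\<in>E. uniform_dist E i > 0 \<longrightarrow> a i > 0)}"
    then obtain a where a: "x = (\<Sum>i\<in>E. uniform_dist E i * log 2 (1 / a i))"
      "a \<in> VP E (line_adj ends)" "\<forall>i\<in>E. uniform_dist E i > 0 \<longrightarrow> a i > 0" by blast
    have "card E > 0" using fin E0 by (simp add: card_gt_0_iff)
    then have "\<forall>i\<in>E. a i > 0" using a(3) by (simp add: uniform_dist_def)
    then show "log 2 (real k) \<le> x" using lower[OF assms(1) reg k0 E0 a(2)] a(1) by simp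
  qed
  show ?thesis unfolding entropy_symmetric_def
  proof (intro allI impI)
    fix p assume p: "prob_dist E p"
    have "graph_entropy E (line_adj ends) p \<le> log 2 (real k)"
    proof (rule ccontr)
      let ?H = "graph_entropy E (line_adj ends) p"
      assume "\<not> ?H \<le> log 2 (real k)"
      then have "log 2 (real k) < ?H" by simp
      then have "2 powr log 2 (real k) < 2 powr ?H" by simp
      then have "Inf F < 2 powr ?H" using InfF k0 by simp
      then obtain S where S: "S \<in> F" "S < 2 powr ?H"
        using cInf_less_iff[OF Fne Fbdd] by blast
      then obtain lam where lam: "feas E ends lam" "S = (\<Sum>M\<in>matchings E ends. lam M)"
        unfolding F_def by blast
      have S1: "S \<ge> 1" using feas_point(3)[OF lam(1) fin E0] lam(2) by simp
      have "?H \<le> log 2 S" using upper[OF lam(1) fin E0 p] lam(2) by simp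
      moreover have "log 2 S < log 2 (2 powr ?H)" using S(2) S1 by (intro log_less) auto
      ultimately show False by simp
    qed
    then show "graph_entropy E (line_adj ends) p \<le> graph_entropy E (line_adj ends) (uniform_dist E)" using low by simp
  qed
qed

end
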